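(* Let $n$ be a natural number, $X=[\underline{x},\overline{x}]$ an interval with rational endpoints and $x \in X$. Then $\arctan(x) \in [\arctan(X)]_n$ and $\exp(x) \in [\exp(X)]_n$; if moreover $\underline{x} \ge 0$ then $\sqrt{x} \in [\sqrt{X}]_n$; and if $\underline{x} > 0$ then $\ln(x) \in [\ln(X)]_n$. Moreover, $\pi \in [\pi]_n$.
   Context: An interval $[a,b]$ with rational endpoints is the set $\{z : a\le z\le b\}$. Bounding functions (all $n\in\mathbb{N}$): Square root ($x\ge0$): $\mathrm{UB}_{\mathrm{sqrt}}(x,0)=x+1$, $\mathrm{UB}_{\mathrm{sqrt}}(x,n+1)=\frac12(y+x/y)$ with $y=\mathrm{UB}_{\mathrm{sqrt}}(x,n)$, $\mathrm{LB}_{\mathrm{sqrt}}(x,n)=x/\mathrm{UB}_{\mathrm{sqrt}}(x,n)$. Arctangent: for $0<x\le1$, $\mathrm{LB}_{\mathrm{atan}}(x,n)=\sum_{i=0}^{2n+1}(-1)^i\frac{x^{2i+1}}{2i+1}$, $\mathrm{UB}_{\mathrm{atan}}(x,n)=\sum_{i=0}^{2n}(-1)^i\frac{x^{2i+1}}{2i+1}$; $\mathrm{LB}_{\pi}(n)=16\,\mathrm{LB}_{\mathrm{atan}}(1/5,n)-4\,\mathrm{UB}_{\mathrm{atan}}(1/239,n)$, $\mathrm{UB}_{\pi}(n)=16\,\mathrm{UB}_{\mathrm{atan}}(1/5,n)-4\,\mathrm{LB}_{\mathrm{atan}}(1/239,n)$; both atan bounds are $0$ at $x=0$; for $x>1$,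 $\mathrm{LB}_{\mathrm{atan}}(x,n)=\mathrm{LB}_\pi(n)/2-\mathrm{UB}_{\mathrm{atan}}(1/x,n)$, $\mathrm{UB}_{\mathrm{atan}}(x,n)=\mathrm{UB}_\pi(n)/2-\mathrm{LB}_{\mathrm{atan}}(1/x,n)$; for $x<0$, $\mathrm{LB}_{\mathrm{atan}}(x,n)=-\mathrm{UB}_{\mathrm{atan}}(-x,n)$, $\mathrm{UB}_{\mathrm{atan}}(x,n)=-\mathrm{LB}_{\mathrm{atan}}(-x,n)$. Exponential: for $-1\le x<0$, $\mathrm{LB}_{\exp}(x,n)=\sum_{i=0}^{2n+3}x^i/i!$, $\mathrm{UB}_{\exp}(x,n)=\sum_{i=0}^{2n+2}x^i/i!$; both equal $1$ at $x=0$; for $x<-1$ with $k=-\lfloor x\rfloor$, $\mathrm{LB}_{\exp}(x,n)=\mathrm{LB}_{\exp}(x/k,n)^k$, $\mathrm{UB}_{\exp}(x,n)=\mathrm{UB}_{\exp}(x/k,n)^k$; for $x>0$, $\mathrm{LB}_{\exp}(x,n)=1/\mathrm{UB}_{\exp}(-x,n)$, $\mathrm{UB}_{\exp}(x,n)=1/\mathrm{LB}_{\exp}(-x,n)$. Logarithm: for $1<x\le2$, $\mathrm{LB}_{\ln}(x,n)=\sum_{i=1}^{2n}(-1)^{i+1}\frac{(x-1)^i}{i}$, $\mathrm{UB}_{\ln}(x,n)=\sum_{i=1}^{2n+1}(-1)^{i+1}\frac{(x-1)^i}{i}$; both are $0$ at $x=1$; for $0<x<1$, $\mathrm{LB}_{\ln}(x,n)=-\mathrm{UB}_{\ln}(1/x,n)$,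 $\mathrm{UB}_{\ln}(x,n)=-\mathrm{LB}_{\ln}(1/x,n)$; for $x>2$, writing $x=2^m y$ with $m\in\mathbb{N}$, $1\le y<2$, $\mathrm{LB}_{\ln}(x,n)=m\,\mathrm{LB}_{\ln}(2,n)+\mathrm{LB}_{\ln}(y,n)$, $\mathrm{UB}_{\ln}(x,n)=m\,\mathrm{UB}_{\ln}(2,n)+\mathrm{UB}_{\ln}(y,n)$. Interval functions: $[\sqrt{X}]_n=[\mathrm{LB}_{\mathrm{sqrt}}(\underline{x},n),\mathrm{UB}_{\mathrm{sqrt}}(\overline{x},n)]$ (when $\underline{x}\ge0$); $[\arctan(X)]_n=[\mathrm{LB}_{\mathrm{atan}}(\underline{x},n),\mathrm{UB}_{\mathrm{atan}}(\overline{x},n)]$; $[\pi]_n=[\mathrm{LB}_\pi(n),\mathrm{UB}_\pi(n)]$; $[\exp(X)]_n=[\mathrm{LB}_{\exp}(\underline{x},n),\mathrm{UB}_{\exp}(\overline{x},n)]$; $[\ln(X)]_n=[\mathrm{LB}_{\ln}(\underline{x},n),\mathrm{UB}_{\ln}(\overline{x},n)]$ (when $\underline{x}>0$). *)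

theory Defs
  imports Complex_Main
begin

fun ub_sqrt :: "rat \<Rightarrow> nat \<Rightarrow> rat" where
  "ub_sqrt x 0 = x + 1"
| "ub_sqrt x (Suc n) = (let y = ub_sqrt x n in (y + x / y) / 2)"

definition lb_sqrt :: "rat \<Rightarrow> nat \<Rightarrow> rat" where
  "lb_sqrt x n = x / ub_sqrt x n"

text \<open>Taylor partial sums, used for 0 \<le> x \<le> 1 (both are 0 at x = 0).\<close>
definition lb_atan_base :: "rat \<Rightarrow> nat \<Rightarrow> rat" where
  "lb_atan_base x n = (\<Sum>i\<le>2*n+1. (-1)^i * x^(2*i+1) / of_nat (2*i+1))"

definition ub_atan_base :: "rat \<Rightarrow> nat \<Rightarrow> rat" where
  "ub_atan_base x n = (\<Sum>i\<le>2*n. (-1)^i * x^(2*i+1) / of_nat (2*i+1))"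

definition lb_pi :: "nat \<Rightarrow> rat" where
  "lb_pi n = 16 * lb_atan_base (1/5) n - 4 * ub_atan_base (1/239) n"

definition ub_pi :: "nat \<Rightarrow> rat" where
  "ub_pi n = 16 * ub_atan_base (1/5) n - 4 * lb_atan_base (1/239) n"

definition lb_atan_nonneg :: "rat \<Rightarrow> nat \<Rightarrow> rat" where
  "lb_atan_nonneg x n =
     (if x \<le> 1 then lb_atan_base x n else lb_pi n / 2 - ub_atan_base (1/x) n)"

definition ub_atan_nonneg :: "rat \<Rightarrow> nat \<Rightarrow> rat" where
  "ub_atan_nonneg x n =
     (if x \<le> 1 then ub_atan_base x n else ub_pi n / 2 - lb_atan_base (1/x) n)"

definition lb_atan :: "rat \<Rightarrow> nat \<Rightarrow> rat" where
  "lb_atan x n = (if x < 0 then - ub_atan_nonneg (-x) n else lb_atan_nonneg x n)"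

definition ub_atan :: "rat \<Rightarrow> nat \<Rightarrow> rat" where
  "ub_atan x n = (if x < 0 then - lb_atan_nonneg (-x) n else ub_atan_nonneg x n)"

text \<open>Taylor partial sums, used for -1 \<le> x \<le> 0 (both are 1 at x = 0).\<close>
definition lb_exp_base :: "rat \<Rightarrow> nat \<Rightarrow> rat" where
  "lb_exp_base x n = (\<Sum>i\<le>2*n+3. x^i / fact i)"

definition ub_exp_base :: "rat \<Rightarrow> nat \<Rightarrow> rat" where
  "ub_exp_base x n = (\<Sum>i\<le>2*n+2. x^i / fact i)"

definition lb_exp_nonpos :: "rat \<Rightarrow> nat \<Rightarrow> rat" where
  "lb_exp_nonpos x n =
     (if -1 \<le> x then lb_exp_base x n
      else (let k = nat (- \<lfloor>x\<rfloor>) in lb_exp_base (x / of_nat k) n ^ k))"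

definition ub_exp_nonpos :: "rat \<Rightarrow> nat \<Rightarrow> rat" where
  "ub_exp_nonpos x n =
     (if -1 \<le> x then ub_exp_base x n
      else (let k = nat (- \<lfloor>x\<rfloor>) in ub_exp_base (x / of_nat k) n ^ k))"

definition lb_exp :: "rat \<Rightarrow> nat \<Rightarrow> rat" where
  "lb_exp x n = (if x \<le> 0 then lb_exp_nonpos x n else 1 / ub_exp_nonpos (-x) n)"

definition ub_exp :: "rat \<Rightarrow> nat \<Rightarrow> rat" where
  "ub_exp x n = (if x \<le> 0 then ub_exp_nonpos x n else 1 / lb_exp_nonpos (-x) n)"

text \<open>Taylor partial sums, used for 1 \<le> x \<le> 2 (both are 0 at x = 1).\<close>
definition lb_ln_base :: "rat \<Rightarrow> nat \<Rightarrow> rat" where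
  "lb_ln_base x n = (\<Sum>i=1..2*n. (-1)^(i+1) * (x-1)^i / of_nat i)"

definition ub_ln_base :: "rat \<Rightarrow> nat \<Rightarrow> rat" where
  "ub_ln_base x n = (\<Sum>i=1..2*n+1. (-1)^(i+1) * (x-1)^i / of_nat i)"

text \<open>For x > 2: the unique m with 2^m \<le> x < 2^(m+1), so that x = 2^m y with 1 \<le> y < 2.\<close>
definition ln_exponent :: "rat \<Rightarrow> nat" where
  "ln_exponent x = (THE m. 2^m \<le> x \<and> x < 2^(m+1))"

definition lb_ln_ge1 :: "rat \<Rightarrow> nat \<Rightarrow> rat" where
  "lb_ln_ge1 x n =
     (if x \<le> 2 then lb_ln_base x n
      else (let m = ln_exponent x; y = x / 2^m in
            of_nat m * lb_ln_base 2 n + lb_ln_base y n))"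

definition ub_ln_ge1 :: "rat \<Rightarrow> nat \<Rightarrow> rat" where
  "ub_ln_ge1 x n =
     (if x \<le> 2 then ub_ln_base x n
      else (let m = ln_exponent x; y = x / 2^m in
            of_nat m * ub_ln_base 2 n + ub_ln_base y n))"

definition lb_ln :: "rat \<Rightarrow> nat \<Rightarrow> rat" where
  "lb_ln x n = (if x < 1 then - ub_ln_ge1 (1/x) n else lb_ln_ge1 x n)"

definition ub_ln :: "rat \<Rightarrow> nat \<Rightarrow> rat" where
  "ub_ln x n = (if x < 1 then - lb_ln_ge1 (1/x) n else ub_ln_ge1 x n)"

definition interval_set :: "rat \<times> rat \<Rightarrow> real set" where
  "interval_set X = {real_of_rat (fst X) .. real_of_rat (snd X)}"

definition sqrt_interval :: "rat \<times> rat \<Rightarrow> nat \<Rightarrow> rat \<times> rat" where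
  "sqrt_interval X n = (lb_sqrt (fst X) n, ub_sqrt (snd X) n)"

definition atan_interval :: "rat \<times> rat \<Rightarrow> nat \<Rightarrow> rat \<times> rat" where
  "atan_interval X n = (lb_atan (fst X) n, ub_atan (snd X) n)"

definition pi_interval :: "nat \<Rightarrow> rat \<times> rat" where
  "pi_interval n = (lb_pi n, ub_pi n)"

definition exp_interval :: "rat \<times> rat \<Rightarrow> nat \<Rightarrow> rat \<times> rat" where
  "exp_interval X n = (lb_exp (fst X) n, ub_exp (snd X) n)"

definition ln_interval :: "rat \<times> rat \<Rightarrow> nat \<Rightarrow> rat \<times> rat" where
  "ln_interval X n = (lb_ln (fst X) n, ub_ln (snd X) n)"

end

theory Submission imports Defs begin

lemma alt_bnd:
  fixes a :: "nat \<Rightarrow> real"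
  assumes "a \<longlonglongrightarrow> 0" "\<And>i. 0 \<le> a i" "\<And>i. a (Suc i) \<le> a i" "v = (\<Sum>i. (-1)^i * a i)"
  shows "(\<Sum>i<2*m. (-1)^i*a i) \<le> v" "v \<le> (\<Sum>i<2*m+1. (-1)^i*a i)"
proof -
  show "(\<Sum>i<2*m. (-1)^i*a i) \<le> v" unfolding assms(4) by (rule summable_Leibniz'(2)[OF assms(1-3)])
  show "v \<le> (\<Sum>i<2*m+1. (-1)^i*a i)" unfolding assms(4) by (rule summable_Leibniz'(4)[OF assms(1-3)])
qed

lemma alt_zero:
  fixes a :: "nat \<Rightarrow> real"
  assumes "summable (\<lambda>i. (-1)^i * a i)" "\<And>i. 0 \<le> a i"
  shows "a \<longlonglongrightarrow> 0"
proof -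
  have "(\<lambda>i. (-1)^i * a i) \<longlonglongrightarrow> 0" using summable_LIMSEQ_zero[OF assms(1)] .
  then have "(\<lambda>i. \<bar>(-1)^i * a i\<bar>) \<longlonglongrightarrow> 0" by (rule tendsto_rabs_zero)
  moreover have "\<And>i. \<bar>(-1)^i * a i\<bar> = a i" using assms(2) by (simp add: abs_mult)
  ultimately show ?thesis by simp
qed

lemma of_rat_fact: "(of_rat (fact n) :: real) = fact n"
  by (metis of_nat_fact of_rat_of_nat_eq)

lemmas ofr = of_rat_mult of_rat_divide of_rat_power of_rat_diff of_rat_minus of_rat_add of_rat_fact

lemma atan_base_real:
  "real_of_rat (lb_atan_base q n) = (\<Sum>i\<le>2*n+1. (-1)^i * (real_of_rat q)^(2*i+1) / real (2*i+1))"
  "real_of_rat (ub_atan_base q n) = (\<Sum>i\<le>2*n. (-1)^i * (real_of_rat q)^(2*i+1) / real (2*i+1))"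
  unfolding lb_atan_base_def ub_atan_base_def of_rat_sum
  by (rule sum.cong[OF refl], simp only: ofr of_rat_of_nat_eq of_rat_neg_one of_rat_1)+

lemma exp_base_real:
  "real_of_rat (lb_exp_base q n) = (\<Sum>i\<le>2*n+3. (real_of_rat q)^i / fact i)"
  "real_of_rat (ub_exp_base q n) = (\<Sum>i\<le>2*n+2. (real_of_rat q)^i / fact i)"
  unfolding lb_exp_base_def ub_exp_base_def of_rat_sum
  by (rule sum.cong[OF refl], simp only: ofr of_rat_of_nat_eq of_rat_neg_one of_rat_1)+

lemma ln_base_real:
  "real_of_rat (lb_ln_base q n) = (\<Sum>i=1..2*n. (-1)^(i+1) * (real_of_rat q - 1)^i / real i)"
  "real_of_rat (ub_ln_base q n) = (\<Sum>i=1..2*n+1. (-1)^(i+1) * (real_of_rat q - 1)^i / real i)"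
  unfolding lb_ln_base_def ub_ln_base_def of_rat_sum
  by (rule sum.cong[OF refl], simp only: ofr of_rat_of_nat_eq of_rat_neg_one of_rat_1)+



lemma ub_sqrt_ge:
  assumes "0 \<le> q"
  shows "sqrt (of_rat q) \<le> real_of_rat (ub_sqrt q n) \<and> 0 < real_of_rat (ub_sqrt q n)"
proof (induction n)
  case 0
  have r: "0 \<le> real_of_rat q" using assms by simp
  have "(sqrt (of_rat q) - 1)^2 \<ge> 0" by simp
  then have "of_rat q + 1 \<ge> 2 * sqrt (of_rat q)" using r by (simp add: power2_diff)
  moreover have "sqrt (of_rat q) \<ge> 0" using r by simp
  moreover have "real_of_rat (ub_sqrt q 0) = of_rat q + 1" by (simp add: of_rat_add)
  ultimately show ?case using r by linarith
next
  case (Suc n)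
  define y where "y = real_of_rat (ub_sqrt q n)"
  define s where "s = sqrt (real_of_rat q)"
  have r: "0 \<le> real_of_rat q" using assms by simp
  have y: "0 < y" "s \<le> y" using Suc by (auto simp: y_def s_def)
  have ss: "s^2 = real_of_rat q" "0 \<le> s" using r by (auto simp: s_def)
  have eq: "real_of_rat (ub_sqrt q (Suc n)) = (y + real_of_rat q / y) / 2"
    by (simp add: Let_def ofr y_def)
  have "(y - s)^2 \<ge> 0" by simp
  then have "y^2 + real_of_rat q \<ge> 2 * y * s" using ss by (simp add: power2_diff)
  then have "y + real_of_rat q / y \<ge> 2 * s" using y
    by (simp add: field_simps power2_eq_square)
  moreover have "real_of_rat q / y \<ge> 0" using r y by simp
  ultimately show ?case unfolding eq using y by (simp add: s_def)
qed

lemma lb_sqrt_le: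
  assumes "0 \<le> q"
  shows "real_of_rat (lb_sqrt q n) \<le> sqrt (of_rat q)"
proof -
  define y where "y = real_of_rat (ub_sqrt q n)"
  define s where "s = sqrt (real_of_rat q)"
  have r: "0 \<le> real_of_rat q" using assms by simp
  have y: "0 < y" "s \<le> y" using ub_sqrt_ge[OF assms, of n] by (auto simp: y_def s_def)
  have ss: "s * s = real_of_rat q" "0 \<le> s" using r by (auto simp: s_def)
  have "real_of_rat (lb_sqrt q n) = (s * s) / y" by (simp add: lb_sqrt_def ofr y_def ss)
  also have "\<dots> \<le> (s * y) / y"
    using y ss by (intro divide_right_mono mult_left_mono) auto
  also have "\<dots> = s" using y by simp
  finally show ?thesis by (simp add: s_def)
qed

lemma atan_term: "(1 / real (k*2+1) * x^(k*2+1)) = (x::real)^(2*k+1) / real(2*k+1)"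
  by (simp add: mult.commute[of k 2])

lemma atan_base:
  assumes "0 \<le> q" "q \<le> 1"
  shows "real_of_rat (lb_atan_base q n) \<le> arctan (of_rat q) \<and> arctan (of_rat q) \<le> real_of_rat (ub_atan_base q n)"
proof -
  define r where "r = real_of_rat q"
  have r: "0 \<le> r" "r \<le> 1" using assms by (auto simp: r_def)
  define a where "a = (\<lambda>i::nat. r^(2*i+1) / real(2*i+1))"
  have apos: "\<And>i. 0 \<le> a i" using r by (simp add: a_def)
  have amono: "\<And>i. a (Suc i) \<le> a i"
  proof -
    fix i
    have "r^(2*Suc i+1) \<le> r^(2*i+1)" using r by (intro power_decreasing) auto
    then show "a (Suc i) \<le> a i" unfolding a_def using r by (intro frac_le) auto
  qed
  have ra: "\<bar>r\<bar> \<le> 1" using r by simp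
  have "summable (\<lambda>i. (-1)^i * a i)" using summable_arctan_series[OF ra] by (simp only: a_def atan_term)
  then have az: "a \<longlonglongrightarrow> 0" using alt_zero apos by blast
  have v: "arctan r = (\<Sum>i. (-1)^i * a i)" using arctan_series[OF ra] by (simp only: a_def atan_term)
  note b = alt_bnd[OF az apos amono v]
  have s1: "{..2*n+1} = {..<2*(n+1)}" "{..2*n} = {..<2*n+1}" by auto
  have t: "\<And>i. (-1)^i * (real_of_rat q)^(2*i+1) / real (2*i+1) = (-1)^i * a i"
    by (simp add: a_def r_def)
  have e1: "real_of_rat (lb_atan_base q n) = (\<Sum>i<2*(n+1). (-1)^i * a i)"
    by (simp only: atan_base_real t s1)
  have e2: "real_of_rat (ub_atan_base q n) = (\<Sum>i<2*n+1. (-1)^i * a i)"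
    by (simp only: atan_base_real t s1)
  show ?thesis using b[of "n+1"] b[of n] e1 e2 unfolding r_def by linarith
qed


lemma pi_aux:
  fixes p x y a1 b1 a2 b2 :: real
  assumes "p/4 = 4*x - y" "a1 \<le> x \<and> x \<le> b1" "a2 \<le> y \<and> y \<le> b2"
  shows "16*a1 - 4*b2 \<le> p \<and> p \<le> 16*b1 - 4*a2"
  using assms by linarith

lemma pi_bnd: "real_of_rat (lb_pi n) \<le> pi \<and> pi \<le> real_of_rat (ub_pi n)"
proof -
  have f5: "real_of_rat (1/5) = 1/5" "(0::rat) \<le> 1/5" "(1/5::rat) \<le> 1"
    by (simp add: of_rat_divide, simp, simp only: divide_le_eq_1, simp)
  have f239: "real_of_rat (1/239) = 1/239" "(0::rat) \<le> 1/239" "(1/239::rat) \<le> 1"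
    by (simp add: of_rat_divide, simp, simp only: divide_le_eq_1, simp)
  note a = atan_base[OF f5(2,3), of n, unfolded f5(1)]
  note b = atan_base[OF f239(2,3), of n, unfolded f239(1)]
  note c = pi_aux[OF machin a b]
  have e1: "real_of_rat (lb_pi n) = 16 * real_of_rat (lb_atan_base (1/5) n) - 4 * real_of_rat (ub_atan_base (1/239) n)"
    by (simp only: lb_pi_def of_rat_diff of_rat_mult of_rat_numeral_eq)
  have e2: "real_of_rat (ub_pi n) = 16 * real_of_rat (ub_atan_base (1/5) n) - 4 * real_of_rat (lb_atan_base (1/239) n)"
    by (simp only: ub_pi_def of_rat_diff of_rat_mult of_rat_numeral_eq)
  show ?thesis unfolding e1 e2 by (rule c)
qed

lemma atan_nonneg:
  assumes "0 \<le> q"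
  shows "real_of_rat (lb_atan_nonneg q n) \<le> arctan (of_rat q) \<and> arctan (of_rat q) \<le> real_of_rat (ub_atan_nonneg q n)"
proof (cases "q \<le> 1")
  case True
  then show ?thesis using atan_base[OF assms True] by (simp add: lb_atan_nonneg_def ub_atan_nonneg_def)
next
  case False
  have q: "0 \<le> 1/q" "1/q \<le> 1" using False by auto
  have e: "real_of_rat (1/q) = 1 / real_of_rat q" by (simp add: of_rat_divide)
  note b = atan_base[OF q, of n, unfolded e]
  have pos: "0 < real_of_rat q" using False by simp
  have inv0: "arctan (1 / real_of_rat q) = sgn (real_of_rat q) * pi/2 - arctan (real_of_rat q)"
    using pos by (intro Transcendental.arctan_inverse) simp
  have "sgn (real_of_rat q) * pi/2 = pi/2" using pos by simp
  with inv0 have inv: "arctan (1 / real_of_rat q) = pi/2 - arctan (real_of_rat q)" by linarith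
  have e1: "real_of_rat (lb_atan_nonneg q n) = real_of_rat (lb_pi n) / 2 - real_of_rat (ub_atan_base (1/q) n)"
    using False by (simp add: lb_atan_nonneg_def of_rat_diff of_rat_divide)
  have e2: "real_of_rat (ub_atan_nonneg q n) = real_of_rat (ub_pi n) / 2 - real_of_rat (lb_atan_base (1/q) n)"
    using False by (simp add: ub_atan_nonneg_def of_rat_diff of_rat_divide)
  show ?thesis using b pi_bnd[of n] inv e1 e2 by linarith
qed

lemma atan_bnd:
  "real_of_rat (lb_atan q n) \<le> arctan (of_rat q) \<and> arctan (of_rat q) \<le> real_of_rat (ub_atan q n)"
proof (cases "q < 0")
  case True
  then have "0 \<le> -q" by simp
  note b = atan_nonneg[OF this, of n]
  then show ?thesis using True by (simp add: lb_atan_def ub_atan_def of_rat_minus arctan_minus)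
next
  case False
  then show ?thesis using atan_nonneg[of q n] by (simp add: lb_atan_def ub_atan_def)
qed

lemma even_partial_mono:
  fixes a :: "nat \<Rightarrow> real"
  assumes "\<And>i. a (Suc i) \<le> a i" "m \<le> m'"
  shows "(\<Sum>i<2*m. (-1)^i*a i) \<le> (\<Sum>i<2*m'. (-1)^i*a i)"
  using assms(2)
proof (induction m' rule: dec_induct)
  case base
  then show ?case by simp
next
  case (step k)
  have "2 * Suc k = Suc (Suc (2*k))" by simp
  then have "(\<Sum>i<2*Suc k. (-1)^i*a i) = (\<Sum>i<2*k. (-1)^i*a i) + (a (2*k) - a (Suc (2*k)))"
    by simp
  then show ?case using step assms(1)[of "2*k"] by linarith
qed

lemma exp_base:
  assumes "-1 \<le> q" "q \<le> 0"
  shows "real_of_rat (lb_exp_base q n) \<le> exp (of_rat q) \<and> exp (of_rat q) \<le> real_of_rat (ub_exp_base q n)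
         \<and> 0 < real_of_rat (lb_exp_base q n)"
proof -
  define t where "t = - real_of_rat q"
  have "-1 \<le> real_of_rat q" using of_rat_less_eq[of "-1" q] assms by simp
  then have t: "0 \<le> t" "t \<le> 1" using assms by (auto simp: t_def)
  define a where "a = (\<lambda>i::nat. t^i / fact i)"
  have apos: "\<And>i. 0 \<le> a i" using t by (simp add: a_def)
  have amono: "\<And>i. a (Suc i) \<le> a i"
  proof -
    fix i
    have "a (Suc i) = (t / real (Suc i)) * a i" by (simp add: a_def field_simps)
    moreover have "t / real (Suc i) \<le> 1" using t by (simp add: divide_le_eq)
    ultimately show "a (Suc i) \<le> a i" using apos[of i] t
      by (metis mult_left_le_one_le divide_nonneg_nonneg of_nat_0_le_iff)
  qed
  have tq: "\<And>i. (real_of_rat q)^i / fact i = (-1)^i * a i"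
    by (simp add: a_def t_def power_minus[symmetric])
  have sm: "(\<lambda>i. (-1)^i * a i) sums exp (of_rat q)"
    using exp_converges[of "real_of_rat q"] tq by (simp add: divide_inverse mult.commute)
  then have "summable (\<lambda>i. (-1)^i * a i)" by (rule sums_summable)
  then have az: "a \<longlonglongrightarrow> 0" using alt_zero apos by blast
  have v: "exp (of_rat q) = (\<Sum>i. (-1)^i * a i)" using sm by (simp add: sums_iff)
  note b = alt_bnd[OF az apos amono v]
  have s1: "{..2*n+3} = {..<2*(n+2)}" "{..2*n+2} = {..<2*(n+1)+1}" by auto
  have e1: "real_of_rat (lb_exp_base q n) = (\<Sum>i<2*(n+2). (-1)^i * a i)"
    by (simp only: exp_base_real tq s1)
  have e2: "real_of_rat (ub_exp_base q n) = (\<Sum>i<2*(n+1)+1. (-1)^i * a i)"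
    by (simp only: exp_base_real tq s1)
  have F1: "(\<Sum>i<2*2. (-1)^i * a i) \<le> (\<Sum>i<2*(n+2). (-1)^i * a i)"
    by (intro even_partial_mono amono) simp
  have F2: "(\<Sum>i<2*2. (-1)^i * a i) = 1 - t + t^2/2 - t^3/6"
    by (simp add: a_def numeral_eq_Suc fact_numeral)
  have F3: "1 - t + t^2/2 - t^3/6 > 0"
  proof -
    have "t^3 \<le> t^2" using t by (intro power_decreasing) auto
    then have A: "t^3 \<le> t*t" by (simp add: power2_eq_square)
    have "0 \<le> (t - 3/2)*(t - 3/2)" by simp
    then have B: "0 \<le> t*t - 3*t + 9/4" by (simp add: algebra_simps)
    show ?thesis unfolding power2_eq_square using A B by linarith
  qed
  have p: "0 < (\<Sum>i<2*(n+2). (-1)^i * a i)" using F1 F3 unfolding F2 by linarith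
  show ?thesis unfolding e1 e2 by (intro conjI b(1)[of "n+2"] b(2)[of "n+1"] p)
qed


lemma exp_nonpos:
  assumes "q \<le> 0"
  shows "real_of_rat (lb_exp_nonpos q n) \<le> exp (of_rat q) \<and> exp (of_rat q) \<le> real_of_rat (ub_exp_nonpos q n)
         \<and> 0 < real_of_rat (lb_exp_nonpos q n)"
proof (cases "-1 \<le> q")
  case True
  then show ?thesis using exp_base[OF True assms, of n] by (simp add: lb_exp_nonpos_def ub_exp_nonpos_def)
next
  case False
  define f where "f = \<lfloor>q\<rfloor>"
  define k where "k = nat (- f)"
  have fl: "of_int f \<le> q" "q < of_int f + 1" using floor_correct[of q] by (auto simp: f_def)
  have "q < -1" using False by simp
  then have "of_int f < (of_int (-1)::rat)" using fl(1) by simp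
  then have "f < -1" by (simp only: of_int_less_iff)
  then have f2: "f \<le> -2" by linarith
  have kk: "int k = - f" using f2 unfolding k_def by simp
  have k: "of_nat k = - (of_int f :: rat)" "k \<ge> 2" "of_nat k = - (of_int f :: real)"
  proof -
    show "of_nat k = - (of_int f :: rat)" by (metis of_int_of_nat_eq of_int_minus kk)
    show "of_nat k = - (of_int f :: real)" by (metis of_int_of_nat_eq of_int_minus kk)
    show "k \<ge> 2" using kk f2 by linarith
  qed
  have kpos: "(0::rat) < of_nat k" using k(2) by simp
  have "- of_nat k \<le> q" using fl(1) k(1) by simp
  then have y1: "-1 \<le> q / of_nat k" using kpos by (simp add: le_divide_eq)
  have y2: "q / of_nat k \<le> 0" using assms kpos by (simp add: divide_nonpos_pos)
  note b = exp_base[OF y1 y2, of n]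
  have e: "real_of_rat (q / of_nat k) = real_of_rat q / real k" by (simp add: of_rat_divide)
  have ex: "exp (real_of_rat q / real k) ^ k = exp (real_of_rat q)"
  proof -
    have "exp (real k * (real_of_rat q / real k)) = exp (real_of_rat q / real k) ^ k" by (rule exp_of_nat_mult)
    moreover have "real k * (real_of_rat q / real k) = real_of_rat q" using k(2) by simp
    ultimately show ?thesis by simp
  qed
  define l where "l = real_of_rat (lb_exp_base (q / of_nat k) n)"
  define u where "u = real_of_rat (ub_exp_base (q / of_nat k) n)"
  define z where "z = exp (real_of_rat q / real k)"
  have luz: "l \<le> z" "z \<le> u" "0 < l" using b by (simp_all add: l_def u_def z_def e)
  have "l^k \<le> z^k" using luz by (intro power_mono) auto
  moreover have "z^k \<le> u^k" using luz by (intro power_mono) auto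
  moreover have "0 < l^k" using luz by simp
  moreover have "real_of_rat (lb_exp_nonpos q n) = l^k" "real_of_rat (ub_exp_nonpos q n) = u^k"
    using False by (simp_all add: lb_exp_nonpos_def ub_exp_nonpos_def Let_def f_def[symmetric] k_def[symmetric] of_rat_power l_def u_def)
  ultimately show ?thesis using ex by (simp add: z_def)
qed

lemma exp_bnd:
  "real_of_rat (lb_exp q n) \<le> exp (of_rat q) \<and> exp (of_rat q) \<le> real_of_rat (ub_exp q n)"
proof (cases "q \<le> 0")
  case True
  then show ?thesis using exp_nonpos[OF True, of n] by (simp add: lb_exp_def ub_exp_def)
next
  case False
  then have "-q \<le> 0" by simp
  note b = exp_nonpos[OF this, of n]
  define l where "l = real_of_rat (lb_exp_nonpos (-q) n)"
  define u where "u = real_of_rat (ub_exp_nonpos (-q) n)"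
  define z where "z = exp (- real_of_rat q)"
  have luz: "l \<le> z" "z \<le> u" "0 < l" using b by (simp_all add: l_def u_def z_def of_rat_minus)
  have ez: "exp (real_of_rat q) = 1 / z" by (simp add: z_def exp_minus')
  have "z > 0" by (simp add: z_def)
  have "1 / u \<le> 1 / z" using luz \<open>z > 0\<close> by (intro divide_left_mono) auto
  moreover have "1 / z \<le> 1 / l" using luz by (intro divide_left_mono) auto
  moreover have "real_of_rat (lb_exp q n) = 1 / u" "real_of_rat (ub_exp q n) = 1 / l"
    using False by (simp_all add: lb_exp_def ub_exp_def of_rat_divide l_def u_def)
  ultimately show ?thesis using ez by simp
qed

lemma ln_sum_conv:
  "(\<Sum>i=1..K. (-1)^(i+1) * t^i / real i) = (\<Sum>i<K. (-1)^i * ((t::real)^(Suc i) / real (Suc i)))"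
proof -
  have "(\<Sum>i=1..K. (-1)^(i+1) * t^i / real i) = (\<Sum>i=Suc 0..K. (\<lambda>i. (-1)^(i+1) * t^i / real i) i)" by simp
  also have "\<dots> = (\<Sum>i<K. (\<lambda>i. (-1)^(i+1) * t^i / real i) (Suc i))" by (rule sum.atLeast1_atMost_eq)
  finally show ?thesis by simp
qed

lemma ln_alt_lt:
  fixes r :: real
  assumes "1 \<le> r" "r < 2"
  shows "(\<Sum>i<2*m. (-1)^i * ((r-1)^(Suc i) / real (Suc i))) \<le> ln r
       \<and> ln r \<le> (\<Sum>i<2*m+1. (-1)^i * ((r-1)^(Suc i) / real (Suc i)))"
proof -
  define t where "t = r - 1"
  have t: "0 \<le> t" "t \<le> 1" using assms by (auto simp: t_def)
  define a where "a = (\<lambda>i::nat. t^(Suc i) / real (Suc i))"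
  have apos: "\<And>i. 0 \<le> a i" using t by (simp add: a_def)
  have amono: "\<And>i. a (Suc i) \<le> a i"
  proof -
    fix i
    have "t^(Suc (Suc i)) \<le> t^(Suc i)" using t by (intro power_decreasing) auto
    then show "a (Suc i) \<le> a i" unfolding a_def using t by (intro frac_le) auto
  qed
  have az: "a \<longlonglongrightarrow> 0"
  proof (rule real_tendsto_sandwich[OF _ _ tendsto_const LIMSEQ_inverse_real_of_nat])
    show "\<forall>\<^sub>F n in sequentially. 0 \<le> a n" using apos by simp
    have "\<And>n. a n \<le> inverse (real (Suc n))"
    proof -
      fix n
      have "t^(Suc n) \<le> 1" using power_le_one[OF t] .
      then have "t^(Suc n) / real (Suc n) \<le> 1 / real (Suc n)" by (intro divide_right_mono) auto
      then show "a n \<le> inverse (real (Suc n))" by (simp add: a_def inverse_eq_divide)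
    qed
    then show "\<forall>\<^sub>F n in sequentially. a n \<le> inverse (real (Suc n))" by simp
  qed
  have v: "ln r = (\<Sum>i. (-1)^i * a i)"
  proof -
    have "ln r = (\<Sum>i. (-1)^i * (1 / real (i + 1)) * (r - 1)^(Suc i))"
      using assms by (intro ln_series) auto
    also have "(\<lambda>i. (-1)^i * (1 / real (i + 1)) * (r - 1)^(Suc i)) = (\<lambda>i. (-1)^i * a i)"
      by (rule ext) (simp add: a_def t_def)
    finally show ?thesis .
  qed
  note b = alt_bnd[OF az apos amono v]
  show ?thesis using b[of m] unfolding a_def t_def by blast
qed

lemma ln_alt:
  fixes r :: real
  assumes "1 \<le> r" "r \<le> 2"
  shows "(\<Sum>i<2*m. (-1)^i * ((r-1)^(Suc i) / real (Suc i))) \<le> ln r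
       \<and> ln r \<le> (\<Sum>i<2*m+1. (-1)^i * ((r-1)^(Suc i) / real (Suc i)))"
proof (cases "r < 2")
  case True
  then show ?thesis using ln_alt_lt[OF assms(1) True] by blast
next
  case False
  then have r2: "r = 2" using assms by simp
  define S where "S = (\<lambda>K (x::real). \<Sum>i<K. (-1)^i * ((x-1)^(Suc i) / real (Suc i)))"
  have lim: "\<And>K. ((\<lambda>x. S K x) \<longlongrightarrow> S K 2) (at_left 2)"
  proof -
    fix K
    have "((\<lambda>x. S K x) \<longlongrightarrow> S K 2) (at 2)"
      unfolding S_def by (intro tendsto_intros) auto
    then show "((\<lambda>x. S K x) \<longlongrightarrow> S K 2) (at_left 2)"
      by (rule tendsto_mono[rotated]) (simp add: at_le)
  qed
  have lnl: "(ln \<longlongrightarrow> ln 2) (at_left (2::real))"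
  proof -
    have "((\<lambda>x. ln x) \<longlongrightarrow> ln 2) (at_left (2::real))"
      by (intro tendsto_intros) simp
    then show ?thesis by simp
  qed
  have ev: "eventually (\<lambda>x. 1 \<le> x \<and> x < 2) (at_left (2::real))"
    using eventually_at_left_real[of 1 "2::real"] by (auto elim: eventually_mono)
  have ev1: "eventually (\<lambda>x. S (2*m) x \<le> ln x) (at_left (2::real))"
    using ev by (rule eventually_mono) (use ln_alt_lt in \<open>auto simp: S_def\<close>)
  have ev2: "eventually (\<lambda>x. ln x \<le> S (2*m+1) x) (at_left (2::real))"
    using ev by (rule eventually_mono) (use ln_alt_lt in \<open>auto simp: S_def\<close>)
  have "S (2*m) 2 \<le> ln 2" by (rule tendsto_le[OF trivial_limit_at_left_real lnl lim ev1])
  moreover have "ln 2 \<le> S (2*m+1) 2" by (rule tendsto_le[OF trivial_limit_at_left_real lim lnl ev2])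
  ultimately show ?thesis using r2 by (simp add: S_def)
qed

lemma ln_base:
  assumes "1 \<le> q" "q \<le> 2"
  shows "real_of_rat (lb_ln_base q n) \<le> ln (of_rat q) \<and> ln (of_rat q) \<le> real_of_rat (ub_ln_base q n)"
proof -
  have "1 \<le> real_of_rat q" "real_of_rat q \<le> 2" using assms of_rat_less_eq[of 1 q] of_rat_less_eq[of q 2] by auto
  note b = ln_alt[OF this, of n]
  have e1: "real_of_rat (lb_ln_base q n) = (\<Sum>i<2*n. (-1)^i * ((real_of_rat q - 1)^(Suc i) / real (Suc i)))"
    unfolding ln_base_real ln_sum_conv ..
  have e2: "real_of_rat (ub_ln_base q n) = (\<Sum>i<2*n+1. (-1)^i * ((real_of_rat q - 1)^(Suc i) / real (Suc i)))"
    unfolding ln_base_real ln_sum_conv ..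
  show ?thesis using b unfolding e1 e2 .
qed

lemma ln_exponent_prop:
  assumes "2 < q"
  shows "2^(ln_exponent q) \<le> q \<and> q < 2^(ln_exponent q + 1)"
proof -
  obtain N where N: "q < of_nat N" using reals_Archimedean2 by blast
  have "of_nat N < (of_nat (2^N) :: rat)" by (simp only: of_nat_less_iff less_exp)
  moreover have "(of_nat (2^N)::rat) = 2^N" by simp
  ultimately have "q < 2^N" using N by linarith
  then have ex: "\<exists>k. q < 2^k" by blast
  define m0 where "m0 = (LEAST k. q < (2::rat)^k)"
  have h: "q < 2^m0" unfolding m0_def by (rule LeastI_ex[OF ex])
  have "m0 \<noteq> 0"
  proof
    assume "m0 = 0"
    then show False using h assms by simp
  qed
  then obtain m where m: "m0 = Suc m" by (cases m0) auto
  have "\<not> q < 2^m" by (rule not_less_Least) (simp add: m0_def[symmetric] m)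
  then have P: "2^m \<le> q \<and> q < 2^(m+1)" using h m by simp
  have "ln_exponent q = m" unfolding ln_exponent_def
  proof (rule the_equality)
    show "2^m \<le> q \<and> q < 2^(m+1)" by (rule P)
    fix m' assume P': "2^m' \<le> q \<and> q < (2::rat)^(m'+1)"
    show "m' = m"
    proof (rule ccontr)
      assume "m' \<noteq> m"
      then consider "m' + 1 \<le> m" | "m + 1 \<le> m'" by linarith
      then show False
      proof cases
        case 1
        then have "(2::rat)^(m'+1) \<le> 2^m" by (rule power_increasing) simp
        then show False using P P' by simp
      next
        case 2
        then have "(2::rat)^(m+1) \<le> 2^m'" by (rule power_increasing) simp
        then show False using P P' by simp
      qed
    qed
  qed
  then show ?thesis using P by simp
qed

lemma ge1_aux:
  fixes L U X a b c Ly ly uy :: real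
  assumes "a \<le> b" "b \<le> c" "L = a + ly" "U = c + uy" "ly \<le> Ly \<and> Ly \<le> uy" "X = b + Ly"
  shows "L \<le> X \<and> X \<le> U"
  using assms by linarith

lemma ln_ge1:
  assumes "1 \<le> q"
  shows "real_of_rat (lb_ln_ge1 q n) \<le> ln (of_rat q) \<and> ln (of_rat q) \<le> real_of_rat (ub_ln_ge1 q n)"
proof (cases "q \<le> 2")
  case True
  then show ?thesis using ln_base[OF assms True, of n] by (simp add: lb_ln_ge1_def ub_ln_ge1_def)
next
  case False
  define m where "m = ln_exponent q"
  define y where "y = q / 2^m"
  have P: "2^m \<le> q" "q < 2^(m+1)" using ln_exponent_prop[of q] False by (auto simp: m_def)
  have p2: "(0::rat) < 2^m" by simp
  have y1: "1 \<le> y" using P p2 by (simp add: y_def le_divide_eq)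
  have y2: "y \<le> 2" using P p2 by (simp add: y_def divide_le_eq)
  note bY = ln_base[OF y1 y2, of n]
  note b2 = ln_base[of 2 n, simplified]
  have ey: "real_of_rat y = real_of_rat q / 2^m" by (simp add: y_def of_rat_divide of_rat_power)
  have qpos: "0 < real_of_rat q" using False by simp
  have lq: "ln (real_of_rat q) = real m * ln 2 + ln (real_of_rat y)"
    using qpos by (simp add: ey ln_div ln_realpow)
  have "real m * real_of_rat (lb_ln_base 2 n) \<le> real m * ln 2" using b2 by (intro mult_left_mono) auto
  moreover have "real m * ln 2 \<le> real m * real_of_rat (ub_ln_base 2 n)" using b2 by (intro mult_left_mono) auto
  moreover have "real_of_rat (lb_ln_ge1 q n) = real m * real_of_rat (lb_ln_base 2 n) + real_of_rat (lb_ln_base y n)"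
  proof -
    have "lb_ln_ge1 q n = of_nat m * lb_ln_base 2 n + lb_ln_base y n"
      using False unfolding lb_ln_ge1_def Let_def m_def y_def by simp
    then show ?thesis by (simp only: of_rat_add of_rat_mult of_rat_of_nat_eq)
  qed
  moreover have "real_of_rat (ub_ln_ge1 q n) = real m * real_of_rat (ub_ln_base 2 n) + real_of_rat (ub_ln_base y n)"
  proof -
    have "ub_ln_ge1 q n = of_nat m * ub_ln_base 2 n + ub_ln_base y n"
      using False unfolding ub_ln_ge1_def Let_def m_def y_def by simp
    then show ?thesis by (simp only: of_rat_add of_rat_mult of_rat_of_nat_eq)
  qed
  ultimately show ?thesis using bY lq by (rule ge1_aux)
qed

lemma ln_bnd:
  assumes "0 < q"
  shows "real_of_rat (lb_ln q n) \<le> ln (of_rat q) \<and> ln (of_rat q) \<le> real_of_rat (ub_ln q n)"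
proof (cases "q < 1")
  case True
  have "1 \<le> 1/q" using True assms by simp
  note b = ln_ge1[OF this, of n]
  have "ln (real_of_rat (1/q)) = - ln (real_of_rat q)" using assms by (simp add: of_rat_divide ln_div)
  then show ?thesis using b True by (simp add: lb_ln_def ub_ln_def of_rat_minus)
next
  case False
  then show ?thesis using ln_ge1[of q n] by (simp add: lb_ln_def ub_ln_def)
qed


theorem proposition12:
  fixes n :: nat and X :: "rat \<times> rat" and x :: real
  assumes "x \<in> interval_set X"
  shows "arctan x \<in> interval_set (atan_interval X n)
       \<and> exp x \<in> interval_set (exp_interval X n)
       \<and> (fst X \<ge> 0 \<longrightarrow> sqrt x \<in> interval_set (sqrt_interval X n))
       \<and> (fst X > 0 \<longrightarrow> ln x \<in> interval_set (ln_interval X n))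
       \<and> pi \<in> interval_set (pi_interval n)"
proof -
  obtain a b where X: "X = (a, b)" by (cases X)
  from assms have x: "real_of_rat a \<le> x" "x \<le> real_of_rat b" by (auto simp: interval_set_def X)
  have A: "arctan x \<in> interval_set (atan_interval X n)"
  proof -
    have "arctan (real_of_rat a) \<le> arctan x" "arctan x \<le> arctan (real_of_rat b)"
      using x by (simp_all add: arctan_le_iff)
    then have "real_of_rat (lb_atan a n) \<le> arctan x" "arctan x \<le> real_of_rat (ub_atan b n)"
      using atan_bnd[of a n] atan_bnd[of b n] by linarith+
    then show ?thesis by (simp add: interval_set_def atan_interval_def X)
  qed
  have E: "exp x \<in> interval_set (exp_interval X n)"
  proof -
    have "exp (real_of_rat a) \<le> exp x" "exp x \<le> exp (real_of_rat b)" using x by simp_all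
    then have "real_of_rat (lb_exp a n) \<le> exp x" "exp x \<le> real_of_rat (ub_exp b n)"
      using exp_bnd[of a n] exp_bnd[of b n] by linarith+
    then show ?thesis by (simp add: interval_set_def exp_interval_def X)
  qed
  have S: "fst X \<ge> 0 \<longrightarrow> sqrt x \<in> interval_set (sqrt_interval X n)"
  proof
    assume "fst X \<ge> 0"
    then have a0: "0 \<le> a" by (simp add: X)
    then have "0 \<le> real_of_rat a" by simp
    then have "0 \<le> real_of_rat b" using x by linarith
    then have b0: "0 \<le> b" by simp
    have "sqrt (real_of_rat a) \<le> sqrt x" "sqrt x \<le> sqrt (real_of_rat b)" using x by simp_all
    then have "real_of_rat (lb_sqrt a n) \<le> sqrt x" "sqrt x \<le> real_of_rat (ub_sqrt b n)"
      using lb_sqrt_le[OF a0, of n] ub_sqrt_ge[OF b0, of n] by linarith+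
    then show "sqrt x \<in> interval_set (sqrt_interval X n)"
      by (simp add: interval_set_def sqrt_interval_def X)
  qed
  have L: "fst X > 0 \<longrightarrow> ln x \<in> interval_set (ln_interval X n)"
  proof
    assume "fst X > 0"
    then have a0: "0 < a" by (simp add: X)
    then have ra: "0 < real_of_rat a" by simp
    then have rb: "0 < real_of_rat b" using x by linarith
    then have b0: "0 < b" by simp
    have x0: "0 < x" using ra x by linarith
    have "ln (real_of_rat a) \<le> ln x" using ra x0 x(1) by (subst ln_le_cancel_iff) auto
    moreover have "ln x \<le> ln (real_of_rat b)" using rb x0 x(2) by (subst ln_le_cancel_iff) auto
    ultimately have "ln (real_of_rat a) \<le> ln x" "ln x \<le> ln (real_of_rat b)" by auto
    then have "real_of_rat (lb_ln a n) \<le> ln x" "ln x \<le> real_of_rat (ub_ln b n)"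
      using ln_bnd[OF a0, of n] ln_bnd[OF b0, of n] by linarith+
    then show "ln x \<in> interval_set (ln_interval X n)"
      by (simp add: interval_set_def ln_interval_def X)
  qed
  have P: "pi \<in> interval_set (pi_interval n)"
    using pi_bnd[of n] by (simp add: interval_set_def pi_interval_def)
  show ?thesis using A E S L P by blast
qed

end
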